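(* Let $\mathcal{L}\in\mathbb{R}^{N_1\times N_2\times N_3}$ be any tensor. Then $$\frac{\mathrm{inc}(\mathcal{L})}{\sqrt{N_3}}\le\xi(\mathcal{L})\le 2\,\mathrm{inc}(\mathcal{L}).$$
   Context: For $\mathcal{A}\in\mathbb{R}^{N_1\times N_2\times N_3}$ write $A^{(k)}=\mathcal{A}(:,:,k)$ for its frontal slices. $\mathrm{bcirc}(\mathcal{A})\in\mathbb{R}^{N_1N_3\times N_2N_3}$ is the block circulant matrix whose $(i,j)$ block is $A^{(((i-j)\bmod N_3)+1)}$; $\mathrm{unfold}$ stacks the frontal slices vertically, $\mathrm{fold}$ is its inverse, and the t-product is $\mathcal{A}*\mathcal{B}=\mathrm{fold}(\mathrm{bcirc}(\mathcal{A})\,\mathrm{unfold}(\mathcal{B}))$. The transpose $\mathcal{A}^\top$ transposes each frontal slice and reverses the order of slices $2,\dots,N_3$. The identity tensor has first frontal slice the identity and other slices zero; f-diagonal means every frontal slice is diagonal. Every $\mathcal{L}$ of tubal rank $R$ has a skinny t-SVD $\mathcal{L}=\mathcal{U}*\mathcal{S}*\mathcal{V}^\top$ with $\mathcal{U}\in\mathbb{R}^{N_1\times R\times N_3}$, $\mathcal{V}\in\mathbb{R}^{N_2\times R\times N_3}$, $\mathcal{U}^\top*\mathcal{U}=\mathcal{V}^\top*\mathcal{V}=\mathcal{I}$, $\mathcal{S}$ f-diagonal. Tensor spectral norm $\|\mathcal{A}\|=\|\mathrm{bcirc}(\mathcal{A})\|$; $\|\cdot\|_\infty$, $\|\cdot\|_F$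 are the entrywise max-absolute-value and Frobenius norms. $T(\mathcal{L})=\{\mathcal{U}*\mathcal{Y}^\top+\mathcal{W}*\mathcal{V}^\top:\mathcal{Y}\in\mathbb{R}^{N_2\times R\times N_3},\mathcal{W}\in\mathbb{R}^{N_1\times R\times N_3}\}$ and $\xi(\mathcal{L})=\max_{\mathcal{N}\in T(\mathcal{L}),\|\mathcal{N}\|\le1}\|\mathcal{N}\|_\infty$. For $N\in\{N_1,N_2\}$ and $1\le n\le N$, let $\mathring{e}_n\in\mathbb{R}^{N\times1\times N_3}$ be the tensor with $(n,1,1)$ entry $1$ and all other entries $0$. With $\mathcal{P}_{\mathcal{U}}=\mathcal{U}*\mathcal{U}^\top$ and $\mathcal{P}_{\mathcal{V}}=\mathcal{V}*\mathcal{V}^\top$ (projections onto $\mathrm{span}(\mathcal{U})$, $\mathrm{span}(\mathcal{V})$), set $\beta(\mathrm{span}(\mathcal{U}))=\max_{1\le n\le N_1}\|\mathcal{P}_{\mathcal{U}}*\mathring{e}_n\|_F$, $\beta(\mathrm{span}(\mathcal{V}))=\max_{1\le n\le N_2}\|\mathcal{P}_{\mathcal{V}}*\mathring{e}_n\|_F$, and $\mathrm{inc}(\mathcal{L})=\max\{\beta(\mathrm{span}(\mathcal{U})),\beta(\mathrm{span}(\mathcal{V}))\}$. *)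

theory Defs
  imports Complex_Main "Jordan_Normal_Form.DL_Rank"
begin

text \<open>Third-order real tensors of size N1 x N2 x N3 are represented as functions
  nat => nat => nat => real, 0-indexed, that vanish outside the index box.\<close>

type_synonym tensor = "nat \<Rightarrow> nat \<Rightarrow> nat \<Rightarrow> real"
type_synonym rmat = "nat \<Rightarrow> nat \<Rightarrow> real"

definition tens :: "nat \<Rightarrow> nat \<Rightarrow> nat \<Rightarrow> tensor set" where
  "tens N1 N2 N3 = {A. \<forall>i j k. \<not> (i < N1 \<and> j < N2 \<and> k < N3) \<longrightarrow> A i j k = 0}"

text \<open>block circulant matrix (N1*N3) x (N2*N3): block (p,q) is slice ((p - q) mod N3)\<close>
definition bcirc :: "nat \<Rightarrow> nat \<Rightarrow> nat \<Rightarrow> tensor \<Rightarrow> rmat" where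
  "bcirc N1 N2 N3 A r c =
     (if r < N1 * N3 \<and> c < N2 * N3
      then A (r mod N1) (c mod N2) ((r div N1 + N3 - c div N2) mod N3) else 0)"

definition unfold :: "nat \<Rightarrow> nat \<Rightarrow> nat \<Rightarrow> tensor \<Rightarrow> rmat" where
  "unfold N1 N2 N3 A r c =
     (if r < N1 * N3 \<and> c < N2 then A (r mod N1) c (r div N1) else 0)"

definition fold :: "nat \<Rightarrow> nat \<Rightarrow> nat \<Rightarrow> rmat \<Rightarrow> tensor" where
  "fold N1 N2 N3 M i j k = (if i < N1 \<and> j < N2 \<and> k < N3 then M (k * N1 + i) j else 0)"

definition matmul :: "nat \<Rightarrow> rmat \<Rightarrow> rmat \<Rightarrow> rmat" where
  "matmul n M P r c = (\<Sum>l<n. M r l * P l c)"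

text \<open>t-product of A (N1 x N2 x N3) and B (N2 x N4 x N3)\<close>
definition tprod :: "nat \<Rightarrow> nat \<Rightarrow> nat \<Rightarrow> nat \<Rightarrow> tensor \<Rightarrow> tensor \<Rightarrow> tensor" where
  "tprod N1 N2 N4 N3 A B =
     fold N1 N4 N3 (matmul (N2 * N3) (bcirc N1 N2 N3 A) (unfold N2 N4 N3 B))"

definition ttrans :: "nat \<Rightarrow> nat \<Rightarrow> nat \<Rightarrow> tensor \<Rightarrow> tensor" where
  "ttrans N1 N2 N3 A i j k =
     (if i < N2 \<and> j < N1 \<and> k < N3 then A j i ((N3 - k) mod N3) else 0)"

definition tadd :: "tensor \<Rightarrow> tensor \<Rightarrow> tensor" where
  "tadd A B i j k = A i j k + B i j k"

definition tident :: "nat \<Rightarrow> nat \<Rightarrow> tensor" where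
  "tident N N3 i j k = (if i < N \<and> i = j \<and> k = 0 \<and> 0 < N3 then 1 else 0)"

definition fdiag :: "tensor \<Rightarrow> bool" where
  "fdiag S \<longleftrightarrow> (\<forall>i j k. i \<noteq> j \<longrightarrow> S i j k = 0)"

definition opnorm :: "nat \<Rightarrow> nat \<Rightarrow> rmat \<Rightarrow> real" where
  "opnorm m n M = Sup {sqrt (\<Sum>r<m. (\<Sum>c<n. M r c * x c)\<^sup>2) | x. (\<Sum>c<n. (x c)\<^sup>2) \<le> 1}"

definition tspec :: "nat \<Rightarrow> nat \<Rightarrow> nat \<Rightarrow> tensor \<Rightarrow> real" where
  "tspec N1 N2 N3 A = opnorm (N1 * N3) (N2 * N3) (bcirc N1 N2 N3 A)"

definition tfro :: "nat \<Rightarrow> nat \<Rightarrow> nat \<Rightarrow> tensor \<Rightarrow> real" where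
  "tfro N1 N2 N3 A = sqrt (\<Sum>i<N1. \<Sum>j<N2. \<Sum>k<N3. (A i j k)\<^sup>2)"

definition tinf :: "nat \<Rightarrow> nat \<Rightarrow> nat \<Rightarrow> tensor \<Rightarrow> real" where
  "tinf N1 N2 N3 A = Max (insert 0 {\<bar>A i j k\<bar> | i j k. i < N1 \<and> j < N2 \<and> k < N3})"

text \<open>tubal rank: maximal rank of the frontal slices of the DFT along the third mode\<close>
definition fslice :: "nat \<Rightarrow> nat \<Rightarrow> nat \<Rightarrow> tensor \<Rightarrow> nat \<Rightarrow> complex mat" where
  "fslice N1 N2 N3 A k = mat N1 N2 (\<lambda>(i, j).
     \<Sum>m<N3. complex_of_real (A i j m) * cis (- 2 * pi * real k * real m / real N3))"

definition tubal_rank :: "nat \<Rightarrow> nat \<Rightarrow> nat \<Rightarrow> tensor \<Rightarrow> nat" where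
  "tubal_rank N1 N2 N3 A =
     Max (insert 0 {vec_space.rank N1 (fslice N1 N2 N3 A k) | k. k < N3})"

definition skinny_tsvd :: "nat \<Rightarrow> nat \<Rightarrow> nat \<Rightarrow> tensor \<Rightarrow> nat \<Rightarrow> tensor \<Rightarrow> tensor \<Rightarrow> tensor \<Rightarrow> bool" where
  "skinny_tsvd N1 N2 N3 L R U S V \<longleftrightarrow>
     R = tubal_rank N1 N2 N3 L \<and>
     U \<in> tens N1 R N3 \<and> S \<in> tens R R N3 \<and> V \<in> tens N2 R N3 \<and>
     L = tprod N1 R N2 N3 (tprod N1 R R N3 U S) (ttrans N2 R N3 V) \<and>
     tprod R N1 R N3 (ttrans N1 R N3 U) U = tident R N3 \<and>
     tprod R N2 R N3 (ttrans N2 R N3 V) V = tident R N3 \<and>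
     fdiag S"

definition tangent :: "nat \<Rightarrow> nat \<Rightarrow> nat \<Rightarrow> nat \<Rightarrow> tensor \<Rightarrow> tensor \<Rightarrow> tensor set" where
  "tangent N1 N2 N3 R U V =
     {tadd (tprod N1 R N2 N3 U (ttrans N2 R N3 Y)) (tprod N1 R N2 N3 W (ttrans N2 R N3 V)) | Y W.
        Y \<in> tens N2 R N3 \<and> W \<in> tens N1 R N3}"

definition xi :: "nat \<Rightarrow> nat \<Rightarrow> nat \<Rightarrow> nat \<Rightarrow> tensor \<Rightarrow> tensor \<Rightarrow> real" where
  "xi N1 N2 N3 R U V =
     Sup {tinf N1 N2 N3 M | M. M \<in> tangent N1 N2 N3 R U V \<and> tspec N1 N2 N3 M \<le> 1}"

text \<open>e_n: N x 1 x N3 tensor with (n,1,1) entry 1 (0-indexed here)\<close>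
definition ecan :: "nat \<Rightarrow> tensor" where
  "ecan n i j k = (if i = n \<and> j = 0 \<and> k = 0 then 1 else 0)"

definition beta :: "nat \<Rightarrow> nat \<Rightarrow> nat \<Rightarrow> tensor \<Rightarrow> real" where
  "beta N R N3 U =
     Max {tfro N 1 N3 (tprod N N 1 N3 (tprod N R N N3 U (ttrans N R N3 U)) (ecan n)) | n. n < N}"

definition inc :: "nat \<Rightarrow> nat \<Rightarrow> nat \<Rightarrow> nat \<Rightarrow> tensor \<Rightarrow> tensor \<Rightarrow> real" where
  "inc N1 N2 N3 R U V = max (beta N1 R N3 U) (beta N2 R N3 V)"

end

theory Submission
  imports Defs
begin

lemma sum_split:
  fixes f :: "nat \<Rightarrow> 'a::comm_monoid_add"
  shows "sum f {..<m*n} = (\<Sum>p<n. \<Sum>i<m. f (p*m+i))"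
proof -
  have "sum f {..<m*n} = (\<Sum>p<n. sum f {p*m..<p*m+m})"
    using sum.nat_group[where g=f and n=n and k=m] by (simp add: mult.commute)
  also have "\<dots> = (\<Sum>p<n. \<Sum>i<m. f (p*m+i))"
  proof (rule sum.cong[OF refl])
    fix p
    have "sum f {0+p*m..<m+p*m} = (\<Sum>i = 0..<m. f (i + p*m))"
      by (rule sum.shift_bounds_nat_ivl)
    then show "sum f {p*m..<p*m+m} = (\<Sum>i<m. f (p*m+i))"
      by (simp add: add.commute lessThan_atLeast0)
  qed
  finally show ?thesis .
qed

lemma int_addN_diff: "(b::nat) \<le> N \<Longrightarrow> int (a + N - b) = int a + int N - int b"
  by simp

lemma l1: "((int s + int N - int q mod int N) mod int N + int q) mod int N = int s mod int N"
proof -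
  have "((int s + int N - int q mod int N) mod int N + int q) mod int N = (int s + int N - int q mod int N + int q) mod int N"
    by (rule mod_add_left_eq)
  also have "int s + int N - int q mod int N + int q = int s + int N * (1 + int q div int N)"
    by (simp add: algebra_simps minus_mod_eq_mult_div)
  also have "(int s + int N * (1 + int q div int N)) mod int N = int s mod int N" by simp
  finally show ?thesis .
qed

lemma l2: "((int t + int q) mod int N + int N - int q mod int N) mod int N = int t mod int N"
proof -
  have "((int t + int q) mod int N + int N - int q mod int N) mod int N = ((int t + int q) mod int N + (int N - int q mod int N)) mod int N"
    by (simp add: algebra_simps)
  also have "\<dots> = (int t + int q + (int N - int q mod int N)) mod int N"
    by (rule mod_add_left_eq)
  also have "int t + int q + (int N - int q mod int N) = int t + int N * (1 + int q div int N)"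
    by (simp add: algebra_simps minus_mod_eq_mult_div)
  also have "(int t + int N * (1 + int q div int N)) mod int N = int t mod int N" by simp
  finally show ?thesis .
qed

lemma mod_rot_inv:
  fixes N :: nat assumes "t < N"
  shows "((t + q) mod N + N - q mod N) mod N = t"
proof -
  have "int (((t + q) mod N + N - q mod N) mod N) = ((int t + int q) mod int N + int N - int q mod int N) mod int N"
    using assms by (simp add: zmod_int int_addN_diff)
  also have "\<dots> = int t" using assms l2 by simp
  finally show ?thesis by linarith
qed

lemma rot_inv2:
  fixes N :: nat assumes "s < N" "0 < N"
  shows "((s + N - q mod N) mod N + q) mod N = s"
proof -
  have "int (((s + N - q mod N) mod N + q) mod N) = ((int s + int N - int q mod int N) mod int N + int q) mod int N"
    using assms by (simp add: zmod_int int_addN_diff)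
  also have "\<dots> = int s" using assms l1 by simp
  finally show ?thesis by linarith
qed

lemma sum_rot:
  fixes g :: "nat \<Rightarrow> 'a::comm_monoid_add" assumes "0 < N"
  shows "(\<Sum>s<N. g s) = (\<Sum>t<N. g ((t + q) mod N))"
  apply (rule sum.reindex_bij_witness[where j = "\<lambda>s. (s + N - q mod N) mod N" and i = "\<lambda>t. (t + q) mod N"])
  using assms by (auto simp: rot_inv2 mod_rot_inv)

lemma cong_int: "(a::int) - b = c * k \<Longrightarrow> a mod c = b mod c"
  by (metis mod_eq_dvd_iff dvd_triv_left)

lemma m3_int: "(p + N - (t + q) mod N) mod N = ((p + N - q) mod N + N - t) mod (N::int)"
proof (rule cong_int[where k = "(t+q) div N + (p+N-q) div N - 1"])
  have a: "(t + q) mod N = (t+q) - N * ((t+q) div N)" by (simp add: minus_div_mult_eq_mod[symmetric] algebra_simps)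
  have b: "(p + N - q) mod N = (p + N - q) - N * ((p + N - q) div N)" by (simp add: minus_div_mult_eq_mod[symmetric] algebra_simps)
  show "p + N - (t + q) mod N - ((p + N - q) mod N + N - t) = N * ((t+q) div N + (p+N-q) div N - 1)"
    unfolding a b by (simp add: algebra_simps)
qed

lemma nat_mod_via_int: "int a mod int N = int b mod int N \<Longrightarrow> a mod N = b mod (N::nat)"
  by (metis of_nat_eq_iff zmod_int)

lemma m3: assumes "q < N" "t < N" shows "(p + N - (t + q) mod N) mod N = ((p + N - q) mod N + N - t) mod (N::nat)"
  apply (rule nat_mod_via_int)
  using assms m3_int[of "int p" "int N" "int t" "int q"] by (simp add: zmod_int int_addN_diff)

lemma mtr_int: "(N - (p + N - q) mod N) mod N = (q + N - p) mod (N::int)"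
proof (rule cong_int[where k = "(p+N-q) div N - 1"])
  have b: "(p + N - q) mod N = (p + N - q) - N * ((p + N - q) div N)" by (simp add: minus_div_mult_eq_mod[symmetric] algebra_simps)
  show "N - (p + N - q) mod N - (q + N - p) = N * ((p+N-q) div N - 1)"
    unfolding b by (simp add: algebra_simps)
qed

lemma mtr: assumes "p < N" "q < N" shows "(N - (p + N - q) mod N) mod N = (q + N - p) mod (N::nat)"
  apply (rule nat_mod_via_int)
  using assms mtr_int[of "int N" "int p" "int q"] by (simp add: zmod_int int_addN_diff of_nat_diff)

lemma mid: "p < N \<Longrightarrow> q < N \<Longrightarrow> (p+N-q) mod N = 0 \<longleftrightarrow> p = (q::nat)"
  using mod_if by force

lemma blk_lt: fixes p :: nat assumes "p < N3" "i < N1" shows "p*N1+i < N1*N3"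
proof -
  have "(p+1)*N1 \<le> N3*N1" using assms by (intro mult_le_mono1) simp
  then have "N1 + p*N1 \<le> N1*N3" by (simp add: algebra_simps)
  then show ?thesis using assms by linarith
qed

lemma blk_decomp: assumes "r < N1*(N3::nat)"
  obtains p i where "r = p*N1+i" "p < N3" "i < N1"
proof -
  have "N1 > 0" using assms by (cases N1) auto
  have "r div N1 < N3" using assms by (simp add: less_mult_imp_div_less mult.commute)
  moreover have "r mod N1 < N1" using \<open>N1 > 0\<close> by simp
  moreover have "r = (r div N1)*N1 + r mod N1" by simp
  ultimately show ?thesis using that by blast
qed

lemma bcirc_blk: assumes "p<N3" "i<N1" "q<N3" "j<N2"
  shows "bcirc N1 N2 N3 A (p*N1+i) (q*N2+j) = A i j ((p+N3-q) mod N3)"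
  using assms blk_lt[of p N3 i N1] blk_lt[of q N3 j N2] by (simp add: bcirc_def)

lemma unfold_blk: assumes "p<N3" "i<N1" "j<N2"
  shows "unfold N1 N2 N3 B (p*N1+i) j = B i j p"
  using assms blk_lt[of p N3 i N1] by (simp add: unfold_def)

lemma bcirc_tprod:
  assumes "0 < N3"
  shows "bcirc N1 N4 N3 (tprod N1 N2 N4 N3 A B) r c = matmul (N2*N3) (bcirc N1 N2 N3 A) (bcirc N2 N4 N3 B) r c"
proof (cases "r < N1*N3 \<and> c < N4*N3")
  case False
  then show ?thesis by (auto simp: bcirc_def matmul_def)
next
  case True
  then obtain p i where r: "r = p*N1+i" "p<N3" "i<N1" by (meson blk_decomp)
  from True obtain q j where c: "c = q*N4+j" "q<N3" "j<N4" by (meson blk_decomp)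
  define d where "d = (p+N3-q) mod N3"
  have d: "d < N3" using assms by (simp add: d_def)
  have "bcirc N1 N4 N3 (tprod N1 N2 N4 N3 A B) r c = tprod N1 N2 N4 N3 A B i j d"
    using r c by (simp add: bcirc_blk d_def)
  also have "\<dots> = (\<Sum>l<N2*N3. bcirc N1 N2 N3 A (d*N1+i) l * unfold N2 N4 N3 B l j)"
    using r c d by (simp add: tprod_def fold_def matmul_def)
  also have "\<dots> = (\<Sum>s<N3. \<Sum>m<N2. A i m ((d+N3-s) mod N3) * B m j s)"
    unfolding sum_split
    by (intro sum.cong refl) (simp add: bcirc_blk unfold_blk d r c)
  finally have L: "bcirc N1 N4 N3 (tprod N1 N2 N4 N3 A B) r c = (\<Sum>s<N3. \<Sum>m<N2. A i m ((d+N3-s) mod N3) * B m j s)" .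
  have "matmul (N2*N3) (bcirc N1 N2 N3 A) (bcirc N2 N4 N3 B) r c
      = (\<Sum>s<N3. \<Sum>m<N2. A i m ((p+N3-s) mod N3) * B m j ((s+N3-q) mod N3))"
    unfolding matmul_def sum_split
    by (intro sum.cong refl) (simp add: bcirc_blk r c)
  also have "\<dots> = (\<Sum>t<N3. \<Sum>m<N2. A i m ((p+N3-(t+q) mod N3) mod N3) * B m j (((t+q) mod N3+N3-q) mod N3))"
    by (rule sum_rot[OF assms])
  also have "\<dots> = (\<Sum>t<N3. \<Sum>m<N2. A i m ((d+N3-t) mod N3) * B m j t)"
  proof (intro sum.cong refl)
    fix t m assume t: "t \<in> {..<N3}"
    have "((t+q) mod N3+N3-q) mod N3 = t" using mod_rot_inv[of t N3 q] t c by simp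
    moreover have "(p+N3-(t+q) mod N3) mod N3 = (d+N3-t) mod N3" using m3[of q N3 t p] t c by (simp add: d_def)
    ultimately show "A i m ((p+N3-(t+q) mod N3) mod N3) * B m j (((t+q) mod N3+N3-q) mod N3) = A i m ((d+N3-t) mod N3) * B m j t"
      by simp
  qed
  finally show ?thesis using L by simp
qed

lemma bcirc_ttrans:
  assumes "0 < N3"
  shows "bcirc N2 N1 N3 (ttrans N1 N2 N3 A) r c = bcirc N1 N2 N3 A c r"
proof (cases "r < N2*N3 \<and> c < N1*N3")
  case False
  then show ?thesis by (auto simp: bcirc_def)
next
  case True
  then obtain p i where r: "r = p*N2+i" "p<N3" "i<N2" by (meson blk_decomp)
  from True obtain q j where c: "c = q*N1+j" "q<N3" "j<N1" by (meson blk_decomp)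
  show ?thesis using r c assms mtr[of p N3 q] by (simp add: bcirc_blk ttrans_def)
qed

lemma bcirc_tident:
  assumes "0 < N3"
  shows "bcirc R R N3 (tident R N3) r c = (if r < R*N3 \<and> r = c then 1 else 0)"
proof (cases "r < R*N3 \<and> c < R*N3")
  case False
  then show ?thesis by (auto simp: bcirc_def)
next
  case True
  then obtain p i where r: "r = p*R+i" "p<N3" "i<R" by (meson blk_decomp)
  from True obtain q j where c: "c = q*R+j" "q<N3" "j<R" by (meson blk_decomp)
  have "(p*R+i = q*R+j) \<longleftrightarrow> (p = q \<and> i = j)"
  proof
    assume h: "p*R+i = q*R+j"
    have "(p*R+i) div R = p" "(q*R+j) div R = q" "(p*R+i) mod R = i" "(q*R+j) mod R = j" using r c by auto
    then show "p = q \<and> i = j" using h by metis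
  qed auto
  then show ?thesis using r c assms mid[of p N3 q] True by (auto simp: bcirc_blk tident_def)
qed

lemma CS_sum:
  fixes a b :: "nat \<Rightarrow> real"
  shows "(\<Sum>i\<in>I. a i * b i)\<^sup>2 \<le> (\<Sum>i\<in>I. (a i)\<^sup>2) * (\<Sum>i\<in>I. (b i)\<^sup>2)"
proof (cases "(\<Sum>i\<in>I. (b i)\<^sup>2) > 0")
  case False
  then have "(\<Sum>i\<in>I. (b i)\<^sup>2) = 0" by (metis not_less order_antisym sum_nonneg zero_le_power2)
  then have "\<forall>i\<in>I. b i = 0 \<or> infinite I"
    using sum_nonneg_eq_0_iff[of I "\<lambda>i. (b i)\<^sup>2"] by auto
  then have "(\<Sum>i\<in>I. a i * b i) = 0" by (metis (no_types, lifting) mult_zero_right sum.infinite sum.neutral)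
  then show ?thesis by (simp add: sum_nonneg mult_nonneg_nonneg)
next
  case True
  define A where "A = (\<Sum>i\<in>I. (a i)\<^sup>2)"
  define B where "B = (\<Sum>i\<in>I. (b i)\<^sup>2)"
  define C where "C = (\<Sum>i\<in>I. a i * b i)"
  have exp: "(\<Sum>i\<in>I. (a i - t * b i)\<^sup>2) = A - 2*t*C + t\<^sup>2*B" for t
  proof -
    have "(\<Sum>i\<in>I. (a i - t * b i)\<^sup>2) = (\<Sum>i\<in>I. (a i)\<^sup>2 - 2*t*(a i * b i) + t\<^sup>2*(b i)\<^sup>2)"
      by (rule sum.cong) (simp_all add: power2_eq_square algebra_simps)
    also have "\<dots> = A - 2*t*C + t\<^sup>2*B"
      by (simp add: sum.distrib sum_subtractf sum_distrib_left A_def B_def C_def)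
    finally show ?thesis .
  qed
  have B0: "B > 0" using True by (simp add: B_def)
  have "0 \<le> (\<Sum>i\<in>I. (a i - (C/B) * b i)\<^sup>2)" by (simp add: sum_nonneg)
  then have "0 \<le> A - 2*(C/B)*C + (C/B)\<^sup>2*B" by (simp only: exp)
  then have "0 \<le> B * (A - 2*(C/B)*C + (C/B)\<^sup>2*B)" using B0 by simp
  also have "B * (A - 2*(C/B)*C + (C/B)\<^sup>2*B) = A*B - C\<^sup>2" using B0 by (simp add: field_simps power2_eq_square)
  finally show ?thesis by (simp add: A_def B_def C_def)
qed

lemma CS_abs:
  fixes a b :: "nat \<Rightarrow> real"
  shows "\<bar>\<Sum>i\<in>I. a i * b i\<bar> \<le> sqrt (\<Sum>i\<in>I. (a i)\<^sup>2) * sqrt (\<Sum>i\<in>I. (b i)\<^sup>2)"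
proof -
  have "\<bar>\<Sum>i\<in>I. a i * b i\<bar> = sqrt ((\<Sum>i\<in>I. a i * b i)\<^sup>2)" by simp
  also have "\<dots> \<le> sqrt ((\<Sum>i\<in>I. (a i)\<^sup>2) * (\<Sum>i\<in>I. (b i)\<^sup>2))"
    by (rule real_sqrt_le_mono[OF CS_sum])
  also have "\<dots> = sqrt (\<Sum>i\<in>I. (a i)\<^sup>2) * sqrt (\<Sum>i\<in>I. (b i)\<^sup>2)" by (simp add: real_sqrt_mult)
  finally show ?thesis .
qed

definition frob :: "nat \<Rightarrow> nat \<Rightarrow> rmat \<Rightarrow> real" where
  "frob m n M = sqrt (\<Sum>r<m. \<Sum>c<n. (M r c)\<^sup>2)"

lemma mv_le:
  fixes M :: rmat and x y :: "nat \<Rightarrow> real" and m n :: nat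
  shows "(\<Sum>r<m. (\<Sum>c<n. M r c * x c)\<^sup>2) \<le> (\<Sum>r<m. \<Sum>c<n. (M r c)\<^sup>2) * (\<Sum>c<n. (x c)\<^sup>2)"
proof -
  have "(\<Sum>r<m. (\<Sum>c<n. M r c * x c)\<^sup>2) \<le> (\<Sum>r<m. (\<Sum>c<n. (M r c)\<^sup>2) * (\<Sum>c<n. (x c)\<^sup>2))"
    by (rule sum_mono) (rule CS_sum)
  then show ?thesis by (simp add: sum_distrib_right)
qed

lemma opn_elem_le_frob:
  fixes M :: rmat and x y :: "nat \<Rightarrow> real" and m n :: nat
  assumes "(\<Sum>c<n. (x c)\<^sup>2) \<le> 1"
  shows "sqrt (\<Sum>r<m. (\<Sum>c<n. M r c * x c)\<^sup>2) \<le> frob m n M"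
proof -
  have F: "0 \<le> (\<Sum>r<m. \<Sum>c<n. (M r c)\<^sup>2)" by (intro sum_nonneg) simp
  have "(\<Sum>r<m. (\<Sum>c<n. M r c * x c)\<^sup>2) \<le> (\<Sum>r<m. \<Sum>c<n. (M r c)\<^sup>2) * (\<Sum>c<n. (x c)\<^sup>2)"
    by (rule mv_le)
  also have "\<dots> \<le> (\<Sum>r<m. \<Sum>c<n. (M r c)\<^sup>2)" using assms F by (simp add: mult_left_le)
  finally show ?thesis unfolding frob_def by (rule real_sqrt_le_mono)
qed

lemma opn_bdd: fixes M :: rmat and m n :: nat shows "bdd_above {sqrt (\<Sum>r<m. (\<Sum>c<n. M r c * x c)\<^sup>2) | x. (\<Sum>c<n. (x c)\<^sup>2) \<le> 1}"
proof (rule bdd_aboveI[where M="frob m n M"])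
  fix z assume "z \<in> {sqrt (\<Sum>r<m. (\<Sum>c<n. M r c * x c)\<^sup>2) | x. (\<Sum>c<n. (x c)\<^sup>2) \<le> 1}"
  then obtain x where "z = sqrt (\<Sum>r<m. (\<Sum>c<n. M r c * x c)\<^sup>2)" "(\<Sum>c<n. (x c)\<^sup>2) \<le> 1" by blast
  then show "z \<le> frob m n M" using opn_elem_le_frob by simp
qed

lemma opnorm_upper:
  fixes M :: rmat and x y :: "nat \<Rightarrow> real" and m n :: nat
  assumes "(\<Sum>c<n. (x c)\<^sup>2) \<le> 1"
  shows "sqrt (\<Sum>r<m. (\<Sum>c<n. M r c * x c)\<^sup>2) \<le> opnorm m n M"
  unfolding opnorm_def by (rule cSup_upper[OF _ opn_bdd]) (use assms in blast)

lemma opnorm_le_frob: fixes M :: rmat shows "opnorm m n M \<le> frob m n M"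
  unfolding opnorm_def
proof (rule cSup_least)
  show "{sqrt (\<Sum>r<m. (\<Sum>c<n. M r c * x c)\<^sup>2) | x. (\<Sum>c<n. (x c)\<^sup>2) \<le> 1} \<noteq> {}"
  proof -
    have "sqrt (\<Sum>r<m. (\<Sum>c<n. M r c * (\<lambda>_. 0::real) c)\<^sup>2) \<in> {sqrt (\<Sum>r<m. (\<Sum>c<n. M r c * x c)\<^sup>2) | x. (\<Sum>c<n. (x c)\<^sup>2) \<le> 1}"
      by (rule CollectI, rule exI[where x="\<lambda>_. 0::real"]) simp
    then show ?thesis by (metis empty_iff)
  qed
next
  fix z assume "z \<in> {sqrt (\<Sum>r<m. (\<Sum>c<n. M r c * x c)\<^sup>2) | x. (\<Sum>c<n. (x c)\<^sup>2) \<le> 1}"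
  then obtain x where "z = sqrt (\<Sum>r<m. (\<Sum>c<n. M r c * x c)\<^sup>2)" "(\<Sum>c<n. (x c)\<^sup>2) \<le> 1" by blast
  then show "z \<le> frob m n M" using opn_elem_le_frob by simp
qed

lemma opnorm_nonneg: fixes M :: rmat shows "0 \<le> opnorm m n M"
proof -
  have "sqrt (\<Sum>r<m. (\<Sum>c<n. M r c * (\<lambda>_. 0::real) c)\<^sup>2) \<le> opnorm m n M"
    by (rule opnorm_upper) simp
  then show ?thesis by simp
qed

lemma opnorm_scaled:
  fixes M :: rmat and x y :: "nat \<Rightarrow> real" and m n :: nat
  shows "sqrt (\<Sum>r<m. (\<Sum>c<n. M r c * x c)\<^sup>2) \<le> opnorm m n M * sqrt (\<Sum>c<n. (x c)\<^sup>2)"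
proof (cases "(\<Sum>c<n. (x c)\<^sup>2) = 0")
  case True
  then have "\<forall>c\<in>{..<n}. x c = 0" using sum_nonneg_eq_0_iff[of "{..<n}" "\<lambda>c. (x c)\<^sup>2"] by simp
  then have "\<And>r. (\<Sum>c<n. M r c * x c) = 0" by simp
  then show ?thesis using True opnorm_nonneg[of m n M] by simp
next
  case False
  define s where "s = sqrt (\<Sum>c<n. (x c)\<^sup>2)"
  have S0: "0 \<le> (\<Sum>c<n. (x c)\<^sup>2)" by (intro sum_nonneg) simp
  then have s: "s > 0" using False by (simp add: s_def)
  have s2: "s\<^sup>2 = (\<Sum>c<n. (x c)\<^sup>2)" using S0 by (simp add: s_def)
  have "(\<Sum>c<n. (x c / s)\<^sup>2) = (\<Sum>c<n. (x c)\<^sup>2) / s\<^sup>2"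
    by (simp add: power_divide sum_divide_distrib)
  also have "\<dots> = 1" using s2 s False by simp
  finally have "(\<Sum>c<n. (x c / s)\<^sup>2) \<le> 1" by simp
  then have "sqrt (\<Sum>r<m. (\<Sum>c<n. M r c * (x c / s))\<^sup>2) \<le> opnorm m n M" by (rule opnorm_upper)
  moreover have "(\<Sum>r<m. (\<Sum>c<n. M r c * (x c / s))\<^sup>2) = (\<Sum>r<m. (\<Sum>c<n. M r c * x c)\<^sup>2) / s\<^sup>2"
  proof -
    have e: "\<And>r. (\<Sum>c<n. M r c * (x c / s)) = (\<Sum>c<n. M r c * x c) / s" by (simp add: sum_divide_distrib)
    have "(\<Sum>r<m. (\<Sum>c<n. M r c * (x c / s))\<^sup>2) = (\<Sum>r<m. ((\<Sum>c<n. M r c * x c) / s)\<^sup>2)" by (simp only: e)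
    also have "\<dots> = (\<Sum>r<m. (\<Sum>c<n. M r c * x c)\<^sup>2 / s\<^sup>2)" by (simp only: power_divide)
    also have "\<dots> = (\<Sum>r<m. (\<Sum>c<n. M r c * x c)\<^sup>2) / s\<^sup>2" by (rule sum_divide_distrib[symmetric])
    finally show ?thesis .
  qed
  moreover have "sqrt ((\<Sum>r<m. (\<Sum>c<n. M r c * x c)\<^sup>2) / s\<^sup>2) = sqrt (\<Sum>r<m. (\<Sum>c<n. M r c * x c)\<^sup>2) / s"
    using s by (simp add: real_sqrt_divide)
  ultimately have "sqrt (\<Sum>r<m. (\<Sum>c<n. M r c * x c)\<^sup>2) / s \<le> opnorm m n M" by (simp only:)
  then have "sqrt (\<Sum>r<m. (\<Sum>c<n. M r c * x c)\<^sup>2) \<le> opnorm m n M * s" using s by (simp add: pos_divide_le_eq)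
  then show ?thesis by (simp only: s_def)
qed

lemma bilin:
  fixes M :: rmat and x y :: "nat \<Rightarrow> real" and m n :: nat
  shows "\<bar>\<Sum>r<m. y r * (\<Sum>c<n. M r c * x c)\<bar>
     \<le> sqrt (\<Sum>r<m. (y r)\<^sup>2) * opnorm m n M * sqrt (\<Sum>c<n. (x c)\<^sup>2)"
proof -
  have "\<bar>\<Sum>r<m. y r * (\<Sum>c<n. M r c * x c)\<bar> \<le> sqrt (\<Sum>r<m. (y r)\<^sup>2) * sqrt (\<Sum>r<m. (\<Sum>c<n. M r c * x c)\<^sup>2)"
    by (rule CS_abs)
  also have "\<dots> \<le> sqrt (\<Sum>r<m. (y r)\<^sup>2) * (opnorm m n M * sqrt (\<Sum>c<n. (x c)\<^sup>2))"
    by (intro mult_left_mono opnorm_scaled) (simp add: sum_nonneg)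
  finally show ?thesis by (simp add: mult.assoc)
qed

definition abt :: "nat \<Rightarrow> rmat \<Rightarrow> rmat \<Rightarrow> rmat" where
  "abt k A B r c = (\<Sum>x<k. A r x * B c x)"

lemma abt_sym: "abt k Q Q r c = abt k Q Q c r"
  unfolding abt_def by (simp add: mult.commute)

lemma swap3:
  fixes f :: "nat \<Rightarrow> real"
  shows "(\<Sum>l\<in>A. f l * (\<Sum>m\<in>B. g l m * h m)) = (\<Sum>m\<in>B. (\<Sum>l\<in>A. f l * g l m) * h m)"
proof -
  have "(\<Sum>l\<in>A. f l * (\<Sum>m\<in>B. g l m * h m)) = (\<Sum>l\<in>A. \<Sum>m\<in>B. f l * g l m * h m)"
    by (simp add: sum_distrib_left mult.assoc)
  also have "\<dots> = (\<Sum>m\<in>B. \<Sum>l\<in>A. f l * g l m * h m)" by (rule sum.swap)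
  also have "\<dots> = (\<Sum>m\<in>B. (\<Sum>l\<in>A. f l * g l m) * h m)" by (simp add: sum_distrib_right)
  finally show ?thesis .
qed

definition ON :: "nat \<Rightarrow> nat \<Rightarrow> rmat \<Rightarrow> bool" where
  "ON a k Q \<longleftrightarrow> (\<forall>x y. x < k \<longrightarrow> y < k \<longrightarrow> (\<Sum>l<a. Q l x * Q l y) = (if x = y then 1 else 0))"

lemma PQ:
  assumes "ON a k Q" "y < k"
  shows "(\<Sum>l<a. abt k Q Q l r * Q l y) = Q r y"
proof -
  have "(\<Sum>l<a. abt k Q Q l r * Q l y) = (\<Sum>l<a. (\<Sum>x<k. Q r x * Q l x) * Q l y)"
    by (simp add: abt_def mult.commute)
  also have "\<dots> = (\<Sum>l<a. \<Sum>x<k. Q r x * (Q l x * Q l y))"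
    by (simp add: sum_distrib_right mult.assoc)
  also have "\<dots> = (\<Sum>x<k. \<Sum>l<a. Q r x * (Q l x * Q l y))" by (rule sum.swap)
  also have "\<dots> = (\<Sum>x<k. Q r x * (\<Sum>l<a. Q l x * Q l y))" by (simp add: sum_distrib_left)
  also have "\<dots> = (\<Sum>x<k. Q r x * (if x = y then 1 else 0))"
    using assms by (intro sum.cong refl) (simp add: ON_def)
  also have "\<dots> = Q r y" using assms(2) by (simp add: if_distrib sum.delta cong: if_cong)
  finally show ?thesis .
qed

lemma PA:
  assumes "ON a k Q"
  shows "(\<Sum>l<a. abt k Q Q l r * abt k Q Y l m) = abt k Q Y r m"
proof -
  have "(\<Sum>l<a. abt k Q Q l r * abt k Q Y l m) = (\<Sum>l<a. abt k Q Q l r * (\<Sum>x<k. Q l x * Y m x))"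
    by (simp add: abt_def)
  also have "\<dots> = (\<Sum>x<k. (\<Sum>l<a. abt k Q Q l r * Q l x) * Y m x)" by (rule swap3)
  also have "\<dots> = (\<Sum>x<k. Q r x * Y m x)"
    using assms by (intro sum.cong refl) (simp add: PQ)
  finally show ?thesis by (simp add: abt_def)
qed

lemma BP:
  assumes "ON b k Z"
  shows "(\<Sum>m<b. abt k W Z l m * abt k Z Z m c) = abt k W Z l c"
proof -
  have "(\<Sum>m<b. abt k W Z l m * abt k Z Z m c) = (\<Sum>m<b. abt k Z Z m c * (\<Sum>x<k. W l x * Z m x))"
    by (simp add: abt_def mult.commute)
  also have "\<dots> = (\<Sum>x<k. (\<Sum>m<b. abt k Z Z m c * Z m x) * W l x)"
    by (subst swap3[symmetric]) (simp add: mult.commute)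
  also have "\<dots> = (\<Sum>x<k. Z c x * W l x)"
    using assms by (intro sum.cong refl) (simp add: PQ)
  finally show ?thesis by (simp add: abt_def mult.commute)
qed

lemma PP:
  assumes "ON a k Q"
  shows "(\<Sum>l<a. abt k Q Q l r * abt k Q Q l c) = abt k Q Q r c"
  using PA[OF assms, of r Q c] .

lemma P_diag_nonneg: "0 \<le> abt k Q Q r r"
  unfolding abt_def by (intro sum_nonneg) simp

lemma IP_norm:
  assumes "ON a k Q" "r < a"
  shows "(\<Sum>l<a. ((if l = r then 1 else 0) - abt k Q Q l r)\<^sup>2) \<le> 1"
proof -
  have "(\<Sum>l<a. ((if l = r then 1 else 0) - abt k Q Q l r)\<^sup>2)
      = (\<Sum>l<a. (if l = r then 1 - 2 * abt k Q Q r r else 0) + abt k Q Q l r * abt k Q Q l r)"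
    by (intro sum.cong refl) (simp add: power2_eq_square algebra_simps)
  also have "\<dots> = 1 - 2 * abt k Q Q r r + abt k Q Q r r"
    using assms by (simp add: sum.distrib PP)
  finally show ?thesis using P_diag_nonneg[of k Q r] by simp
qed

lemma ident_decomp:
  fixes Y W :: rmat
  assumes QO: "ON a k Q" and ZO: "ON b k Z" and r: "r < a" and c: "c < b"
  defines "Mx \<equiv> \<lambda>r c. abt k Q Y r c + abt k W Z r c"
  shows "Mx r c = (\<Sum>l<a. abt k Q Q l r * (\<Sum>m<b. Mx l m * (if m = c then 1 else 0)))
                 + (\<Sum>l<a. ((if l = r then 1 else 0) - abt k Q Q l r) * (\<Sum>m<b. Mx l m * abt k Z Z m c))"
proof -
  have T1: "(\<Sum>l<a. abt k Q Q l r * (\<Sum>m<b. Mx l m * (if m = c then 1 else 0)))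
      = abt k Q Y r c + (\<Sum>l<a. abt k Q Q l r * abt k W Z l c)"
  proof -
    have "(\<Sum>l<a. abt k Q Q l r * (\<Sum>m<b. Mx l m * (if m = c then 1 else 0)))
        = (\<Sum>l<a. abt k Q Q l r * abt k Q Y l c + abt k Q Q l r * abt k W Z l c)"
      using c by (intro sum.cong refl) (simp add: Mx_def if_distrib sum.delta algebra_simps cong: if_cong)
    also have "\<dots> = abt k Q Y r c + (\<Sum>l<a. abt k Q Q l r * abt k W Z l c)"
      by (simp add: sum.distrib PA[OF QO])
    finally show ?thesis .
  qed
  define D where "D l = (\<Sum>m<b. Mx l m * abt k Z Z m c)" for l
  have D: "D l = (\<Sum>m<b. abt k Q Y l m * abt k Z Z m c) + abt k W Z l c" for l
    by (simp add: D_def Mx_def algebra_simps sum.distrib BP[OF ZO])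
  have "(\<Sum>l<a. ((if l = r then 1 else 0) - abt k Q Q l r) * D l) = (\<Sum>l<a. (if l = r then D l else 0) - abt k Q Q l r * D l)"
    by (intro sum.cong refl) (auto simp: algebra_simps)
  also have "\<dots> = D r - (\<Sum>l<a. abt k Q Q l r * D l)"
    using r by (simp add: sum_subtractf)
  also have "(\<Sum>l<a. abt k Q Q l r * D l)
      = (\<Sum>l<a. abt k Q Q l r * (\<Sum>m<b. abt k Q Y l m * abt k Z Z m c)) + (\<Sum>l<a. abt k Q Q l r * abt k W Z l c)"
    by (simp add: D algebra_simps sum.distrib)
  also have "(\<Sum>l<a. abt k Q Q l r * (\<Sum>m<b. abt k Q Y l m * abt k Z Z m c))
      = (\<Sum>m<b. (\<Sum>l<a. abt k Q Q l r * abt k Q Y l m) * abt k Z Z m c)" by (rule swap3)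
  also have "\<dots> = (\<Sum>m<b. abt k Q Y r m * abt k Z Z m c)" by (simp add: PA[OF QO])
  finally have T2: "(\<Sum>l<a. ((if l = r then 1 else 0) - abt k Q Q l r) * D l) = abt k W Z r c - (\<Sum>l<a. abt k Q Q l r * abt k W Z l c)"
    by (simp add: D)
  show ?thesis using T1 T2 by (simp add: D_def Mx_def)
qed

lemma entry_bound:
  fixes Y W :: rmat
  assumes QO: "ON a k Q" and ZO: "ON b k Z" and r: "r < a" and c: "c < b"
  defines "Mx \<equiv> \<lambda>r c. abt k Q Y r c + abt k W Z r c"
  shows "\<bar>Mx r c\<bar> \<le> opnorm a b Mx * (sqrt (\<Sum>l<a. (abt k Q Q l r)\<^sup>2) + sqrt (\<Sum>m<b. (abt k Z Z m c)\<^sup>2))"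
proof -
  have e: "(\<Sum>m<b. (if m = c then 1 else 0 :: real)\<^sup>2) = 1"
  proof -
    have "(\<Sum>m<b. (if m = c then 1 else 0 :: real)\<^sup>2) = (\<Sum>m<b. (if m = c then 1 else 0 :: real))"
      by (intro sum.cong refl) simp
    also have "\<dots> = 1" using c by simp
    finally show ?thesis .
  qed
  have 1: "\<bar>\<Sum>l<a. abt k Q Q l r * (\<Sum>m<b. Mx l m * (if m = c then 1 else 0))\<bar>
     \<le> sqrt (\<Sum>l<a. (abt k Q Q l r)\<^sup>2) * opnorm a b Mx * 1"
    using bilin[where y="\<lambda>l. abt k Q Q l r" and m=a and M=Mx and n=b and x="\<lambda>m. if m = c then 1 else 0"] e by simp
  have "\<bar>\<Sum>l<a. ((if l = r then 1 else 0) - abt k Q Q l r) * (\<Sum>m<b. Mx l m * abt k Z Z m c)\<bar>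
     \<le> sqrt (\<Sum>l<a. ((if l = r then 1 else 0) - abt k Q Q l r)\<^sup>2) * opnorm a b Mx * sqrt (\<Sum>m<b. (abt k Z Z m c)\<^sup>2)"
    by (rule bilin)
  also have "\<dots> \<le> 1 * opnorm a b Mx * sqrt (\<Sum>m<b. (abt k Z Z m c)\<^sup>2)"
    using IP_norm[OF QO r] opnorm_nonneg[of a b Mx]
    by (intro mult_right_mono) (simp_all add: sum_nonneg)
  finally have 2: "\<bar>\<Sum>l<a. ((if l = r then 1 else 0) - abt k Q Q l r) * (\<Sum>m<b. Mx l m * abt k Z Z m c)\<bar>
     \<le> opnorm a b Mx * sqrt (\<Sum>m<b. (abt k Z Z m c)\<^sup>2)" by simp
  have "Mx r c = (\<Sum>l<a. abt k Q Q l r * (\<Sum>m<b. Mx l m * (if m = c then 1 else 0)))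
                 + (\<Sum>l<a. ((if l = r then 1 else 0) - abt k Q Q l r) * (\<Sum>m<b. Mx l m * abt k Z Z m c))"
    using ident_decomp[OF QO ZO r c] unfolding Mx_def .
  then have "\<bar>Mx r c\<bar> \<le> \<bar>\<Sum>l<a. abt k Q Q l r * (\<Sum>m<b. Mx l m * (if m = c then 1 else 0))\<bar>
                 + \<bar>\<Sum>l<a. ((if l = r then 1 else 0) - abt k Q Q l r) * (\<Sum>m<b. Mx l m * abt k Z Z m c)\<bar>"
    by linarith
  also have "\<dots> \<le> sqrt (\<Sum>l<a. (abt k Q Q l r)\<^sup>2) * opnorm a b Mx + opnorm a b Mx * sqrt (\<Sum>m<b. (abt k Z Z m c)\<^sup>2)"
    using 1 2 by linarith
  finally show ?thesis by (simp add: algebra_simps)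
qed

lemma ON_of:
  assumes "0 < N3" "tprod R N1 R N3 (ttrans N1 R N3 U) U = tident R N3"
  shows "ON (N1*N3) (R*N3) (bcirc N1 R N3 U)"
  unfolding ON_def
proof (intro allI impI)
  fix x y assume xy: "x < R*N3" "y < R*N3"
  have "bcirc R R N3 (tprod R N1 R N3 (ttrans N1 R N3 U) U) x y = bcirc R R N3 (tident R N3) x y"
    using assms(2) by simp
  then show "(\<Sum>l<N1*N3. bcirc N1 R N3 U l x * bcirc N1 R N3 U l y) = (if x = y then 1 else 0)"
    using xy assms(1) by (simp add: bcirc_tprod bcirc_tident bcirc_ttrans matmul_def)
qed

lemma P_eq:
  assumes "0 < N3"
  shows "bcirc N1 N1 N3 (tprod N1 R N1 N3 U (ttrans N1 R N3 U)) r c = abt (R*N3) (bcirc N1 R N3 U) (bcirc N1 R N3 U) r c"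
  using assms by (simp add: bcirc_tprod bcirc_ttrans matmul_def abt_def)

lemma tprod_ecan:
  assumes "0 < N3" "n < N" "i < N" "k < N3"
  shows "tprod N N (Suc 0) N3 Pt (ecan n) i 0 k = bcirc N N N3 Pt (k*N+i) n"
proof -
  have nl: "n < N*N3" using assms blk_lt[of 0 N3 n N] by simp
  have u: "unfold N (Suc 0) N3 (ecan n) l 0 = (if l = n then 1 else 0)" if "l < N*N3" for l
  proof -
    have "(l mod N = n \<and> l div N = 0) \<longleftrightarrow> l = n"
    proof
      assume h: "l mod N = n \<and> l div N = 0"
      have "l = l div N * N + l mod N" by simp
      with h show "l = n" by simp
    next
      assume "l = n" with assms(2) show "l mod N = n \<and> l div N = 0" by simp
    qed
    then show ?thesis using that by (auto simp: unfold_def ecan_def)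
  qed
  have "tprod N N (Suc 0) N3 Pt (ecan n) i 0 k = (\<Sum>l<N*N3. bcirc N N N3 Pt (k*N+i) l * unfold N (Suc 0) N3 (ecan n) l 0)"
    using assms by (simp add: tprod_def fold_def matmul_def algebra_simps)
  also have "\<dots> = (\<Sum>l<N*N3. if l = n then bcirc N N N3 Pt (k*N+i) l else 0)"
    by (intro sum.cong refl) (simp add: u)
  also have "\<dots> = bcirc N N N3 Pt (k*N+i) n" using nl by simp
  finally show ?thesis .
qed

lemma beta_n:
  assumes "0 < N3" "n < N"
  shows "tfro N 1 N3 (tprod N N 1 N3 Pt (ecan n)) = sqrt (\<Sum>r<N*N3. (bcirc N N N3 Pt r n)\<^sup>2)"
proof -
  have "(\<Sum>i<N. \<Sum>j<1. \<Sum>k<N3. (tprod N N 1 N3 Pt (ecan n) i j k)\<^sup>2) = (\<Sum>i<N. \<Sum>k<N3. (tprod N N 1 N3 Pt (ecan n) i 0 k)\<^sup>2)"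
    by simp
  also have "\<dots> = (\<Sum>i<N. \<Sum>k<N3. (bcirc N N N3 Pt (k*N+i) n)\<^sup>2)"
    using assms by (intro sum.cong refl) (simp add: tprod_ecan)
  also have "\<dots> = (\<Sum>k<N3. \<Sum>i<N. (bcirc N N N3 Pt (k*N+i) n)\<^sup>2)" by (rule sum.swap)
  also have "\<dots> = (\<Sum>r<N*N3. (bcirc N N N3 Pt r n)\<^sup>2)" by (rule sum_split[symmetric])
  finally show ?thesis by (simp add: tfro_def)
qed

lemma bcirc_entry:
  assumes "i < N1" "j < N2" "k < N3"
  shows "bcirc N1 N2 N3 A (k*N1+i) j = A i j k"
  using assms bcirc_blk[of k N3 i N1 0 j N2 A] by simp

lemma colshift:
  assumes "0 < N3" "q < N3" "j < N2"
  shows "(\<Sum>r<N1*N3. (bcirc N1 N2 N3 A r (q*N2+j))\<^sup>2) = (\<Sum>r<N1*N3. (bcirc N1 N2 N3 A r j)\<^sup>2)"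
proof -
  define g where "g p = (\<Sum>i<N1. (A i j p)\<^sup>2)" for p
  have "(\<Sum>r<N1*N3. (bcirc N1 N2 N3 A r (q*N2+j))\<^sup>2) = (\<Sum>p<N3. g ((p+N3-q) mod N3))"
    unfolding sum_split g_def using assms by (intro sum.cong refl) (simp add: bcirc_blk)
  also have "\<dots> = (\<Sum>p<N3. g ((p + (N3-q)) mod N3))" using assms by simp
  also have "\<dots> = (\<Sum>p<N3. g p)" by (rule sum_rot[OF assms(1), symmetric])
  also have "\<dots> = (\<Sum>r<N1*N3. (bcirc N1 N2 N3 A r (0*N2+j))\<^sup>2)"
    unfolding sum_split g_def using assms by (intro sum.cong refl) (simp add: bcirc_entry)
  finally show ?thesis by simp
qed

lemma tinf_ge:
  assumes "i < N1" "j < N2" "k < N3"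
  shows "\<bar>A i j k\<bar> \<le> tinf N1 N2 N3 A"
proof -
  have "{\<bar>A i j k\<bar> | i j k. i < N1 \<and> j < N2 \<and> k < N3} \<subseteq> (\<lambda>(i,j,k). \<bar>A i j k\<bar>) ` ({..<N1} \<times> {..<N2} \<times> {..<N3})"
    by (blast | force | fastforce simp: image_iff)
  then have "finite {\<bar>A i j k\<bar> | i j k. i < N1 \<and> j < N2 \<and> k < N3}" by (rule finite_subset) simp
  then show ?thesis unfolding tinf_def using assms by (intro Max_ge) auto
qed

lemma tinf_le:
  assumes "0 \<le> B" "\<And>i j k. i < N1 \<Longrightarrow> j < N2 \<Longrightarrow> k < N3 \<Longrightarrow> \<bar>A i j k\<bar> \<le> B"
  shows "tinf N1 N2 N3 A \<le> B"
proof -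
  have "{\<bar>A i j k\<bar> | i j k. i < N1 \<and> j < N2 \<and> k < N3} \<subseteq> (\<lambda>(i,j,k). \<bar>A i j k\<bar>) ` ({..<N1} \<times> {..<N2} \<times> {..<N3})"
    by (blast | force | fastforce simp: image_iff)
  then have "finite {\<bar>A i j k\<bar> | i j k. i < N1 \<and> j < N2 \<and> k < N3}" by (rule finite_subset) simp
  then show ?thesis unfolding tinf_def using assms by (subst Max_le_iff) auto
qed

lemma beta_ge:
  assumes "n < N"
  shows "tfro N 1 N3 (tprod N N 1 N3 (tprod N R N N3 U (ttrans N R N3 U)) (ecan n)) \<le> beta N R N3 U"
  unfolding beta_def using assms by (intro Max_ge) (auto simp: setcompr_eq_image)

lemma beta_in:
  assumes "0 < N"
  obtains n where "n < N" "beta N R N3 U = tfro N 1 N3 (tprod N N 1 N3 (tprod N R N N3 U (ttrans N R N3 U)) (ecan n))"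
proof -
  let ?f = "\<lambda>n. tfro N 1 N3 (tprod N N 1 N3 (tprod N R N N3 U (ttrans N R N3 U)) (ecan n))"
  have "beta N R N3 U \<in> {?f n | n. n < N}"
    unfolding beta_def using assms by (intro Max_in) (auto simp: setcompr_eq_image)
  then show ?thesis using that by blast
qed

lemma bcirc_tadd: "bcirc N1 N2 N3 (tadd X Y) r c = bcirc N1 N2 N3 X r c + bcirc N1 N2 N3 Y r c"
  by (simp add: bcirc_def tadd_def)

lemma bcirc_tangent_elem:
  assumes "0 < N3"
  shows "bcirc N1 N2 N3 (tadd (tprod N1 R N2 N3 U (ttrans N2 R N3 Y)) (tprod N1 R N2 N3 W (ttrans N2 R N3 V))) r c
     = abt (R*N3) (bcirc N1 R N3 U) (bcirc N2 R N3 Y) r c + abt (R*N3) (bcirc N1 R N3 W) (bcirc N2 R N3 V) r c"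
  using assms by (simp add: bcirc_tadd bcirc_tprod bcirc_ttrans matmul_def abt_def)

lemma sum_if0_sq:
  fixes X :: real and N :: nat assumes "0 < N"
  shows "(\<Sum>i<N. (if i = 0 then X else 0)\<^sup>2) = X\<^sup>2"
proof -
  have "(\<Sum>i<N. (if i = 0 then X else 0)\<^sup>2) = (\<Sum>i<N. if i = 0 then X\<^sup>2 else 0)"
    by (intro sum.cong refl) simp
  also have "\<dots> = X\<^sup>2" using assms by (subst sum.delta) auto
  finally show ?thesis .
qed

lemma bcirc_Z:
  assumes "0 < N3" "p < N3" "i < Nz" "x < R*N3" "n < Nx"
  shows "bcirc Nz R N3 (\<lambda>i j kk. if i = 0 \<and> j < R \<and> kk < N3 then c * X n j kk else 0) (p*Nz+i) x
       = (if i = 0 then c * bcirc Nx R N3 X (p*Nx+n) x else 0)"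
proof -
  obtain q j where x: "x = q*R+j" "q < N3" "j < R" using assms(4) by (meson blk_decomp)
  show ?thesis using assms x by (simp add: bcirc_blk)
qed

lemma upper_elem:
  assumes N: "0 < N1" "0 < N2" "0 < N3"
    and ONU: "ON (N1*N3) (R*N3) (bcirc N1 R N3 U)" and ONV: "ON (N2*N3) (R*N3) (bcirc N2 R N3 V)"
    and Mt: "M \<in> tangent N1 N2 N3 R U V" and sp: "tspec N1 N2 N3 M \<le> 1"
  shows "tinf N1 N2 N3 M \<le> beta N1 R N3 U + beta N2 R N3 V"
proof -
  obtain Y W where M: "M = tadd (tprod N1 R N2 N3 U (ttrans N2 R N3 Y)) (tprod N1 R N2 N3 W (ttrans N2 R N3 V))"
    using Mt unfolding tangent_def by blast
  define k where "k = R*N3"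
  define Ub where "Ub = bcirc N1 R N3 U"
  define Vb where "Vb = bcirc N2 R N3 V"
  define Yb where "Yb = bcirc N2 R N3 Y"
  define Wb where "Wb = bcirc N1 R N3 W"
  define Mx where "Mx = (\<lambda>r c. abt k Ub Yb r c + abt k Wb Vb r c)"
  have bM: "bcirc N1 N2 N3 M = Mx"
    by (intro ext) (simp add: M Mx_def bcirc_tangent_elem[OF N(3)] k_def Ub_def Vb_def Yb_def Wb_def)
  have op: "opnorm (N1*N3) (N2*N3) Mx \<le> 1" using sp bM by (simp add: tspec_def)
  have op0: "0 \<le> opnorm (N1*N3) (N2*N3) Mx" by (rule opnorm_nonneg)
  have bU: "sqrt (\<Sum>l<N1*N3. (abt k Ub Ub l r)\<^sup>2) \<le> beta N1 R N3 U" if rr: "r < N1*N3" for r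
  proof -
    obtain p i where r: "r = p*N1+i" "p < N3" "i < N1" using rr by (meson blk_decomp)
    have "(\<Sum>l<N1*N3. (abt k Ub Ub l r)\<^sup>2) = (\<Sum>l<N1*N3. (bcirc N1 N1 N3 (tprod N1 R N1 N3 U (ttrans N1 R N3 U)) l (p*N1+i))\<^sup>2)"
      using N by (simp add: P_eq k_def Ub_def r)
    also have "\<dots> = (\<Sum>l<N1*N3. (bcirc N1 N1 N3 (tprod N1 R N1 N3 U (ttrans N1 R N3 U)) l i)\<^sup>2)"
      using N r by (intro colshift) simp_all
    finally have eq: "(\<Sum>l<N1*N3. (abt k Ub Ub l r)\<^sup>2) = (\<Sum>l<N1*N3. (bcirc N1 N1 N3 (tprod N1 R N1 N3 U (ttrans N1 R N3 U)) l i)\<^sup>2)" .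
    have "tfro N1 1 N3 (tprod N1 N1 1 N3 (tprod N1 R N1 N3 U (ttrans N1 R N3 U)) (ecan i)) = sqrt (\<Sum>l<N1*N3. (bcirc N1 N1 N3 (tprod N1 R N1 N3 U (ttrans N1 R N3 U)) l i)\<^sup>2)"
      by (rule beta_n) (use N r in auto)
    then have "sqrt (\<Sum>l<N1*N3. (abt k Ub Ub l r)\<^sup>2) = tfro N1 1 N3 (tprod N1 N1 1 N3 (tprod N1 R N1 N3 U (ttrans N1 R N3 U)) (ecan i))"
      using eq by simp
    also have "\<dots> \<le> beta N1 R N3 U" using r by (intro beta_ge)
    finally show ?thesis .
  qed
  have bV: "sqrt (\<Sum>l<N2*N3. (abt k Vb Vb l j)\<^sup>2) \<le> beta N2 R N3 V" if "j < N2" for j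
  proof -
    have "tfro N2 1 N3 (tprod N2 N2 1 N3 (tprod N2 R N2 N3 V (ttrans N2 R N3 V)) (ecan j)) = sqrt (\<Sum>l<N2*N3. (bcirc N2 N2 N3 (tprod N2 R N2 N3 V (ttrans N2 R N3 V)) l j)\<^sup>2)"
      by (rule beta_n) (use N that in auto)
    then have "sqrt (\<Sum>l<N2*N3. (abt k Vb Vb l j)\<^sup>2) = tfro N2 1 N3 (tprod N2 N2 1 N3 (tprod N2 R N2 N3 V (ttrans N2 R N3 V)) (ecan j))"
      using N by (simp add: P_eq k_def Vb_def)
    also have "\<dots> \<le> beta N2 R N3 V" using that by (intro beta_ge)
    finally show ?thesis .
  qed
  have s0: "0 \<le> sqrt (\<Sum>l<N1*N3. (abt k Ub Ub l 0)\<^sup>2)" "0 \<le> sqrt (\<Sum>l<N2*N3. (abt k Vb Vb l 0)\<^sup>2)"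
    by (simp_all add: sum_nonneg)
  have B0: "0 \<le> beta N1 R N3 U + beta N2 R N3 V"
  proof -
    have "0 < N1*N3" using N by simp
    then show ?thesis using s0 bU[of 0] bV[OF N(2)] by linarith
  qed
  show ?thesis
  proof (rule tinf_le[OF B0])
    fix i j kk assume ijk: "i < N1" "j < N2" "kk < N3"
    have r: "kk*N1+i < N1*N3" using ijk by (simp add: blk_lt)
    have c: "j < N2*N3" using ijk blk_lt[of 0 N3 j N2] N by simp
    have "M i j kk = Mx (kk*N1+i) j" using ijk bM bcirc_entry[of i N1 j N2 kk N3 M] by simp
    also have "\<bar>Mx (kk*N1+i) j\<bar> \<le> opnorm (N1*N3) (N2*N3) Mx * (sqrt (\<Sum>l<N1*N3. (abt k Ub Ub l (kk*N1+i))\<^sup>2) + sqrt (\<Sum>m<N2*N3. (abt k Vb Vb m j)\<^sup>2))"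
      unfolding Mx_def by (rule entry_bound[OF ONU[folded Ub_def k_def] ONV[folded Vb_def k_def] r c])
    also have "\<dots> \<le> 1 * (beta N1 R N3 U + beta N2 R N3 V)"
      using op op0 bU[OF r] bV[OF ijk(2)] B0
      by (intro mult_mono add_mono) (simp_all add: sum_nonneg)
    finally show "\<bar>M i j kk\<bar> \<le> beta N1 R N3 U + beta N2 R N3 V" by simp
  qed
qed

lemma cS_eq:
  fixes S :: real assumes "0 \<le> S" "0 < N3"
  shows "(1 / (sqrt (real N3) * sqrt S)) * S = sqrt S / sqrt (real N3)"
proof (cases "S = 0")
  case True then show ?thesis by simp
next
  case False
  then have "sqrt S > 0" using assms by simp
  moreover have "S = sqrt S * sqrt S" using assms by simp
  ultimately show ?thesis using assms by (simp add: field_simps)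
qed

lemma frob_bound:
  fixes S :: real assumes "0 \<le> S" "0 < N3"
  shows "real N3 * ((1 / (sqrt (real N3) * sqrt S))\<^sup>2 * S) \<le> 1"
proof (cases "S = 0")
  case True then show ?thesis by simp
next
  case False
  then have "(1 / (sqrt (real N3) * sqrt S))\<^sup>2 = 1 / (real N3 * S)"
    using assms by (simp add: power_mult_distrib power_divide)
  then show ?thesis using assms False by simp
qed

lemma lowerU_exists:
  assumes N: "0 < N1" "0 < N2" "0 < N3"
    and ONU: "ON (N1*N3) (R*N3) (bcirc N1 R N3 U)" and n: "n < N1"
  shows "\<exists>M. M \<in> tangent N1 N2 N3 R U V \<and> tspec N1 N2 N3 M \<le> 1 \<and>
     sqrt (\<Sum>l<N1*N3. (abt (R*N3) (bcirc N1 R N3 U) (bcirc N1 R N3 U) l n)\<^sup>2) / sqrt (real N3) \<le> tinf N1 N2 N3 M"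
proof -
  define k where "k = R*N3"
  define Ub where "Ub = bcirc N1 R N3 U"
  define P where "P = abt k Ub Ub"
  define S where "S = (\<Sum>l<N1*N3. (P l n)\<^sup>2)"
  have S0: "0 \<le> S" unfolding S_def by (intro sum_nonneg) simp
  have Pnn: "P n n = S"
    using PP[OF ONU, of n n] by (simp add: S_def P_def k_def Ub_def power2_eq_square)
  define c where "c = 1 / (sqrt (real N3) * sqrt S)"
  define Y where "Y = (\<lambda>(i::nat) j kk. if i = 0 \<and> j < R \<and> kk < N3 then c * U n j kk else (0::real))"
  define W where "W = (\<lambda>(i::nat) (j::nat) (kk::nat). (0::real))"
  define M where "M = tadd (tprod N1 R N2 N3 U (ttrans N2 R N3 Y)) (tprod N1 R N2 N3 W (ttrans N2 R N3 V))"
  have Yt: "Y \<in> tens N2 R N3" using N by (auto simp: tens_def Y_def)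
  have Wt: "W \<in> tens N1 R N3" by (simp add: tens_def W_def)
  have Mt: "M \<in> tangent N1 N2 N3 R U V" unfolding tangent_def M_def using Yt Wt by blast
  have bM: "bcirc N1 N2 N3 M r c' = abt k Ub (bcirc N2 R N3 Y) r c'" for r c'
  proof -
    have "abt k (bcirc N1 R N3 W) (bcirc N2 R N3 V) r c' = 0"
      by (simp add: abt_def bcirc_def W_def)
    then show ?thesis using N by (simp add: M_def bcirc_tangent_elem k_def Ub_def)
  qed
  have bM2: "bcirc N1 N2 N3 M r (p*N2+i) = (if i = 0 then c * P r (p*N1+n) else 0)" if pi: "p < N3" "i < N2" for r p i
  proof -
    have "bcirc N1 N2 N3 M r (p*N2+i) = (\<Sum>x<k. Ub r x * (if i = 0 then c * Ub (p*N1+n) x else 0))"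
      unfolding bM abt_def using N pi n
      by (intro sum.cong refl) (simp add: Y_def bcirc_Z k_def Ub_def)
    also have "\<dots> = (if i = 0 then c * P r (p*N1+n) else 0)"
      by (cases "i = 0") (simp_all add: P_def abt_def sum_distrib_left algebra_simps)
    finally show ?thesis .
  qed
  have entry: "M n 0 0 = c * S"
  proof -
    have "M n 0 0 = bcirc N1 N2 N3 M (0*N1+n) (0*N2+0)" using bcirc_entry[of n N1 0 N2 0 N3 M] N n by simp
    also have "\<dots> = c * P n n" using bM2[of 0 0 n] N by simp
    finally show ?thesis using Pnn by simp
  qed
  have tinfM: "sqrt S / sqrt (real N3) \<le> tinf N1 N2 N3 M"
  proof -
    have "sqrt S / sqrt (real N3) = \<bar>M n 0 0\<bar>" using entry cS_eq[OF S0 N(3)] S0 by (simp add: c_def)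
    also have "\<dots> \<le> tinf N1 N2 N3 M" using N n by (intro tinf_ge) auto
    finally show ?thesis .
  qed
  have colS: "(\<Sum>r<N1*N3. (P r (p*N1+n))\<^sup>2) = S" if p: "p < N3" for p
  proof -
    have "(\<Sum>r<N1*N3. (P r (p*N1+n))\<^sup>2) = (\<Sum>r<N1*N3. (bcirc N1 N1 N3 (tprod N1 R N1 N3 U (ttrans N1 R N3 U)) r (p*N1+n))\<^sup>2)"
      using N by (simp add: P_eq P_def k_def Ub_def)
    also have "\<dots> = (\<Sum>r<N1*N3. (bcirc N1 N1 N3 (tprod N1 R N1 N3 U (ttrans N1 R N3 U)) r n)\<^sup>2)"
      using N p n by (intro colshift) simp_all
    also have "\<dots> = S" using N by (simp add: P_eq P_def k_def Ub_def S_def)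
    finally show ?thesis .
  qed
  have fro: "(\<Sum>r<N1*N3. \<Sum>c'<N2*N3. (bcirc N1 N2 N3 M r c')\<^sup>2) = real N3 * (c\<^sup>2 * S)"
  proof -
    have "(\<Sum>r<N1*N3. \<Sum>c'<N2*N3. (bcirc N1 N2 N3 M r c')\<^sup>2) = (\<Sum>r<N1*N3. \<Sum>p<N3. \<Sum>i<N2. (if i = 0 then c * P r (p*N1+n) else 0)\<^sup>2)"
      unfolding sum_split[of _ N2 N3] by (intro sum.cong refl) (simp add: bM2)
    also have "\<dots> = (\<Sum>r<N1*N3. \<Sum>p<N3. c\<^sup>2 * (P r (p*N1+n))\<^sup>2)"
      using N by (intro sum.cong refl) (simp add: sum_if0_sq power_mult_distrib)
    also have "\<dots> = (\<Sum>p<N3. c\<^sup>2 * (\<Sum>r<N1*N3. (P r (p*N1+n))\<^sup>2))"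
      by (subst sum.swap) (simp add: sum_distrib_left)
    also have "\<dots> = (\<Sum>p<N3. c\<^sup>2 * S)" by (intro sum.cong refl) (simp add: colS)
    finally show ?thesis by simp
  qed
  have sp: "tspec N1 N2 N3 M \<le> 1"
  proof -
    have "tspec N1 N2 N3 M \<le> frob (N1*N3) (N2*N3) (bcirc N1 N2 N3 M)"
      unfolding tspec_def by (rule opnorm_le_frob)
    also have "\<dots> = sqrt (real N3 * (c\<^sup>2 * S))" by (simp add: frob_def fro)
    also have "\<dots> \<le> 1" using frob_bound[OF S0 N(3)] by (simp add: c_def)
    finally show ?thesis .
  qed
  show ?thesis using Mt sp tinfM by (auto simp: S_def P_def k_def Ub_def)
qed

lemma lowerV_exists:
  assumes N: "0 < N1" "0 < N2" "0 < N3"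
    and ONV: "ON (N2*N3) (R*N3) (bcirc N2 R N3 V)" and n: "n < N2"
  shows "\<exists>M. M \<in> tangent N1 N2 N3 R U V \<and> tspec N1 N2 N3 M \<le> 1 \<and>
     sqrt (\<Sum>l<N2*N3. (abt (R*N3) (bcirc N2 R N3 V) (bcirc N2 R N3 V) l n)\<^sup>2) / sqrt (real N3) \<le> tinf N1 N2 N3 M"
proof -
  define k where "k = R*N3"
  define Vb where "Vb = bcirc N2 R N3 V"
  define P where "P = abt k Vb Vb"
  define S where "S = (\<Sum>l<N2*N3. (P l n)\<^sup>2)"
  have S0: "0 \<le> S" unfolding S_def by (intro sum_nonneg) simp
  have Pnn: "P n n = S"
    using PP[OF ONV, of n n] by (simp add: S_def P_def k_def Vb_def power2_eq_square)
  define c where "c = 1 / (sqrt (real N3) * sqrt S)"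
  define W where "W = (\<lambda>(i::nat) j kk. if i = 0 \<and> j < R \<and> kk < N3 then c * V n j kk else (0::real))"
  define Y where "Y = (\<lambda>(i::nat) (j::nat) (kk::nat). (0::real))"
  define M where "M = tadd (tprod N1 R N2 N3 U (ttrans N2 R N3 Y)) (tprod N1 R N2 N3 W (ttrans N2 R N3 V))"
  have Wt: "W \<in> tens N1 R N3" using N by (auto simp: tens_def W_def)
  have Yt: "Y \<in> tens N2 R N3" by (simp add: tens_def Y_def)
  have Mt: "M \<in> tangent N1 N2 N3 R U V" unfolding tangent_def M_def using Yt Wt by blast
  have bM: "bcirc N1 N2 N3 M r c' = abt k (bcirc N1 R N3 W) Vb r c'" for r c'
  proof -
    have "abt k (bcirc N1 R N3 U) (bcirc N2 R N3 Y) r c' = 0"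
      by (simp add: abt_def bcirc_def Y_def)
    then show ?thesis using N by (simp add: M_def bcirc_tangent_elem k_def Vb_def)
  qed
  have bM2: "bcirc N1 N2 N3 M (p*N1+i) c' = (if i = 0 then c * P (p*N2+n) c' else 0)" if pi: "p < N3" "i < N1" for c' p i
  proof -
    have "bcirc N1 N2 N3 M (p*N1+i) c' = (\<Sum>x<k. (if i = 0 then c * Vb (p*N2+n) x else 0) * Vb c' x)"
      unfolding bM abt_def using N pi n
      by (intro sum.cong refl) (simp add: W_def bcirc_Z k_def Vb_def)
    also have "\<dots> = (if i = 0 then c * P (p*N2+n) c' else 0)"
      by (cases "i = 0") (simp_all add: P_def abt_def sum_distrib_left algebra_simps)
    finally show ?thesis .
  qed
  have entry: "M 0 n 0 = c * S"
  proof -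
    have "M 0 n 0 = bcirc N1 N2 N3 M (0*N1+0) n" using bcirc_entry[of 0 N1 n N2 0 N3 M] N n by simp
    also have "\<dots> = c * P (0*N2+n) n" using bM2[of 0 0 n] N by simp
    finally show ?thesis using Pnn by simp
  qed
  have tinfM: "sqrt S / sqrt (real N3) \<le> tinf N1 N2 N3 M"
  proof -
    have "sqrt S / sqrt (real N3) = \<bar>M 0 n 0\<bar>" using entry cS_eq[OF S0 N(3)] S0 by (simp add: c_def)
    also have "\<dots> \<le> tinf N1 N2 N3 M" using N n by (intro tinf_ge) auto
    finally show ?thesis .
  qed
  have colS: "(\<Sum>r<N2*N3. (P (p*N2+n) r)\<^sup>2) = S" if p: "p < N3" for p
  proof -
    have "(\<Sum>r<N2*N3. (P (p*N2+n) r)\<^sup>2) = (\<Sum>r<N2*N3. (bcirc N2 N2 N3 (tprod N2 R N2 N3 V (ttrans N2 R N3 V)) r (p*N2+n))\<^sup>2)"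
      using N by (simp add: P_eq P_def k_def Vb_def abt_sym[of _ _ "p*N2+n"])
    also have "\<dots> = (\<Sum>r<N2*N3. (bcirc N2 N2 N3 (tprod N2 R N2 N3 V (ttrans N2 R N3 V)) r n)\<^sup>2)"
      using N p n by (intro colshift) simp_all
    also have "\<dots> = S" using N by (simp add: P_eq P_def k_def Vb_def S_def)
    finally show ?thesis .
  qed
  have fro: "(\<Sum>r<N1*N3. \<Sum>c'<N2*N3. (bcirc N1 N2 N3 M r c')\<^sup>2) = real N3 * (c\<^sup>2 * S)"
  proof -
    have "(\<Sum>r<N1*N3. \<Sum>c'<N2*N3. (bcirc N1 N2 N3 M r c')\<^sup>2) = (\<Sum>p<N3. \<Sum>i<N1. \<Sum>c'<N2*N3. (if i = 0 then c * P (p*N2+n) c' else 0)\<^sup>2)"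
      unfolding sum_split[of _ N1 N3] by (intro sum.cong refl) (simp add: bM2)
    also have "\<dots> = (\<Sum>p<N3. \<Sum>c'<N2*N3. \<Sum>i<N1. (if i = 0 then c * P (p*N2+n) c' else 0)\<^sup>2)"
      by (rule sum.cong[OF refl]) (rule sum.swap)
    also have "\<dots> = (\<Sum>p<N3. \<Sum>c'<N2*N3. c\<^sup>2 * (P (p*N2+n) c')\<^sup>2)"
      using N by (intro sum.cong refl) (simp add: sum_if0_sq power_mult_distrib)
    also have "\<dots> = (\<Sum>p<N3. c\<^sup>2 * (\<Sum>c'<N2*N3. (P (p*N2+n) c')\<^sup>2))"
      by (simp add: sum_distrib_left)
    also have "\<dots> = (\<Sum>p<N3. c\<^sup>2 * S)" by (intro sum.cong refl) (simp add: colS)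
    finally show ?thesis by simp
  qed
  have sp: "tspec N1 N2 N3 M \<le> 1"
  proof -
    have "tspec N1 N2 N3 M \<le> frob (N1*N3) (N2*N3) (bcirc N1 N2 N3 M)"
      unfolding tspec_def by (rule opnorm_le_frob)
    also have "\<dots> = sqrt (real N3 * (c\<^sup>2 * S))" by (simp add: frob_def fro)
    also have "\<dots> \<le> 1" using frob_bound[OF S0 N(3)] by (simp add: c_def)
    finally show ?thesis .
  qed
  show ?thesis using Mt sp tinfM by (auto simp: S_def P_def k_def Vb_def)
qed

theorem lemma3:
  fixes N1 N2 N3 R :: nat and L U S V :: tensor
  assumes "0 < N1" and "0 < N2" and "0 < N3"
    and "L \<in> tens N1 N2 N3"
    and "skinny_tsvd N1 N2 N3 L R U S V"
  shows "inc N1 N2 N3 R U V / sqrt (real N3) \<le> xi N1 N2 N3 R U V \<and>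
         xi N1 N2 N3 R U V \<le> 2 * inc N1 N2 N3 R U V"
proof -
  have h: "tprod R N1 R N3 (ttrans N1 R N3 U) U = tident R N3" "tprod R N2 R N3 (ttrans N2 R N3 V) V = tident R N3"
    using assms(5) unfolding skinny_tsvd_def by blast+
  have ONU: "ON (N1*N3) (R*N3) (bcirc N1 R N3 U)" by (rule ON_of[OF assms(3) h(1)])
  have ONV: "ON (N2*N3) (R*N3) (bcirc N2 R N3 V)" by (rule ON_of[OF assms(3) h(2)])
  define T where "T = {tinf N1 N2 N3 M | M. M \<in> tangent N1 N2 N3 R U V \<and> tspec N1 N2 N3 M \<le> 1}"
  have xi: "xi N1 N2 N3 R U V = Sup T" by (simp add: xi_def T_def)
  define B where "B = beta N1 R N3 U + beta N2 R N3 V"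
  have ub: "t \<le> B" if "t \<in> T" for t
    using that upper_elem[OF assms(1-3) ONU ONV] by (auto simp: T_def B_def)
  have bdd: "bdd_above T" using ub by (intro bdd_aboveI) blast
  have ne: "T \<noteq> {}" using lowerU_exists[OF assms(1-3) ONU assms(1), of V] by (auto simp: T_def)
  have upper: "xi N1 N2 N3 R U V \<le> B" unfolding xi using ne ub by (intro cSup_least) auto
  have lowU: "beta N1 R N3 U / sqrt (real N3) \<le> xi N1 N2 N3 R U V"
  proof -
    obtain n where n: "n < N1" and bn: "beta N1 R N3 U = tfro N1 1 N3 (tprod N1 N1 1 N3 (tprod N1 R N1 N3 U (ttrans N1 R N3 U)) (ecan n))"
      by (rule beta_in[OF assms(1)])
    have "beta N1 R N3 U = sqrt (\<Sum>r<N1*N3. (bcirc N1 N1 N3 (tprod N1 R N1 N3 U (ttrans N1 R N3 U)) r n)\<^sup>2)"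
      using bn beta_n[OF assms(3) n] by simp
    also have "\<dots> = sqrt (\<Sum>l<N1*N3. (abt (R*N3) (bcirc N1 R N3 U) (bcirc N1 R N3 U) l n)\<^sup>2)"
      using assms(3) by (simp add: P_eq)
    finally have be: "beta N1 R N3 U = sqrt (\<Sum>l<N1*N3. (abt (R*N3) (bcirc N1 R N3 U) (bcirc N1 R N3 U) l n)\<^sup>2)" .
    obtain M where M: "M \<in> tangent N1 N2 N3 R U V" "tspec N1 N2 N3 M \<le> 1"
      "sqrt (\<Sum>l<N1*N3. (abt (R*N3) (bcirc N1 R N3 U) (bcirc N1 R N3 U) l n)\<^sup>2) / sqrt (real N3) \<le> tinf N1 N2 N3 M"
      using lowerU_exists[OF assms(1-3) ONU n, of V] by blast
    have "tinf N1 N2 N3 M \<in> T" using M by (auto simp: T_def)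
    then have "tinf N1 N2 N3 M \<le> Sup T" using bdd by (rule cSup_upper)
    then show ?thesis using M(3) be xi by simp
  qed
  have lowV: "beta N2 R N3 V / sqrt (real N3) \<le> xi N1 N2 N3 R U V"
  proof -
    obtain n where n: "n < N2" and bn: "beta N2 R N3 V = tfro N2 1 N3 (tprod N2 N2 1 N3 (tprod N2 R N2 N3 V (ttrans N2 R N3 V)) (ecan n))"
      by (rule beta_in[OF assms(2)])
    have "beta N2 R N3 V = sqrt (\<Sum>r<N2*N3. (bcirc N2 N2 N3 (tprod N2 R N2 N3 V (ttrans N2 R N3 V)) r n)\<^sup>2)"
      using bn beta_n[OF assms(3) n] by simp
    also have "\<dots> = sqrt (\<Sum>l<N2*N3. (abt (R*N3) (bcirc N2 R N3 V) (bcirc N2 R N3 V) l n)\<^sup>2)"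
      using assms(3) by (simp add: P_eq)
    finally have be: "beta N2 R N3 V = sqrt (\<Sum>l<N2*N3. (abt (R*N3) (bcirc N2 R N3 V) (bcirc N2 R N3 V) l n)\<^sup>2)" .
    obtain M where M: "M \<in> tangent N1 N2 N3 R U V" "tspec N1 N2 N3 M \<le> 1"
      "sqrt (\<Sum>l<N2*N3. (abt (R*N3) (bcirc N2 R N3 V) (bcirc N2 R N3 V) l n)\<^sup>2) / sqrt (real N3) \<le> tinf N1 N2 N3 M"
      using lowerV_exists[OF assms(1-3) ONV n, of U] by blast
    have "tinf N1 N2 N3 M \<in> T" using M by (auto simp: T_def)
    then have "tinf N1 N2 N3 M \<le> Sup T" using bdd by (rule cSup_upper)
    then show ?thesis using M(3) be xi by simp
  qed
  show ?thesis
  proof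
    show "inc N1 N2 N3 R U V / sqrt (real N3) \<le> xi N1 N2 N3 R U V"
      unfolding inc_def using lowU lowV by (cases "beta N1 R N3 U \<le> beta N2 R N3 V") (simp_all add: max_def)
    show "xi N1 N2 N3 R U V \<le> 2 * inc N1 N2 N3 R U V"
      using upper unfolding inc_def B_def by linarith
  qed
qed

end
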